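(* Let $q$ be a prime power, $n,r$ integers with $r\le\lfloor n/2\rfloor$, and $0<\rho<r$. For $0 \le \delta \le \rho$, let $T_\delta = \min \sum_{i=0}^r A_i(\delta)$, where the minimum is over all integer sequences $(A_i(\delta))_{i=0}^r$ satisfying: $A_i(\delta) = 0$ for $0\le i\le \delta-1$; $1 \le A_\delta(\delta) \le N_{\mathrm{C}}(\delta)$; $0 \le A_i(\delta)\le N_{\mathrm{C}}(i)$ for $\delta+1\le i\le r$; and $\sum_{i=0}^r A_i(\delta)\sum_{s=0}^\rho J_{\mathrm{C}}(l,s,i) \ge N_{\mathrm{C}}(l)$ for all $0\le l\le r$. Then $K_{\mathrm{C}}(q,n,r,\rho) \ge \max_{0\le\delta\le\rho} T_\delta$.
   Context: $E_r(q,n)$ is the set of $r$-dimensional subspaces of $\mathrm{GF}(q)^n$, with injection distance $d_{\mathrm{I}}(U,V) = \dim(U+V)-\min\{\dim U,\dim V\}$. ${m\brack k}=\prod_{i=0}^{k-1}\frac{q^m-q^i}{q^k-q^i}$; $N_{\mathrm{C}}(d) = q^{d^2}{r\brack d}{n-r \brack d}$ is the number of elements of $E_r(q,n)$ at injection distance $d$ from a fixed one. For $0\le u,s,d\le r$, $J_{\mathrm{C}}(u,s,d)$ is the number of $W\in E_r(q,n)$ with $d_{\mathrm{I}}(W,U)=u$ and $d_{\mathrm{I}}(W,V)=s$, for any fixed $U,V\in E_r(q,n)$ with $d_{\mathrm{I}}(U,V)=d$ (it depends only on $u,s,d$). The covering radius of a nonempty $\mathcal{C}\subseteq E_r(q,n)$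 is $\max_{U}\min_{C\in\mathcal{C}} d_{\mathrm{I}}(U,C)$; $K_{\mathrm{C}}(q,n,r,\rho)$ is the minimum cardinality of a subset of $E_r(q,n)$ with covering radius at most $\rho$. *)

theory Defs
  imports "HOL-Analysis.Analysis"
begin

text \<open>Ambient space GF(q)^n is rendered as the vector type 'a^'n over a finite field 'a
  (q = CARD('a), n = CARD('n)).\<close>

definition Er :: "nat \<Rightarrow> ('a::{finite,field}^'n) set set" where
  "Er r = {U. vec.subspace U \<and> vec.dim U = r}"

definition dI :: "('a::{finite,field}^'n) set \<Rightarrow> ('a^'n) set \<Rightarrow> nat" where
  "dI U V = vec.dim (vec.span (U \<union> V)) - min (vec.dim U) (vec.dim V)"

definition gbinom :: "nat \<Rightarrow> nat \<Rightarrow> nat \<Rightarrow> real" where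
  "gbinom q m k = (\<Prod>i<k. (real q ^ m - real q ^ i) / (real q ^ k - real q ^ i))"

definition NC :: "nat \<Rightarrow> nat \<Rightarrow> nat \<Rightarrow> nat \<Rightarrow> real" where
  "NC q n r d = real q ^ (d\<^sup>2) * gbinom q r d * gbinom q (n - r) d"

text \<open>J_C(u,s,d): number of W in E_r with d_I(W,U)=u, d_I(W,V)=s for a fixed pair (U,V)
  in E_r with d_I(U,V)=d (chosen by Hilbert choice; the count does not depend on the choice).\<close>
definition JC :: "'a::{finite,field} itself \<Rightarrow> 'n::finite itself \<Rightarrow> nat \<Rightarrow> nat \<Rightarrow> nat \<Rightarrow> nat \<Rightarrow> nat" where
  "JC _ _ r u s d =
     (let P = (SOME P :: ('a::{finite,field}^'n) set \<times> ('a^'n) set.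
                 fst P \<in> Er r \<and> snd P \<in> Er r \<and> dI (fst P) (snd P) = d)
      in card {W \<in> Er r. dI W (fst P) = u \<and> dI W (snd P) = s})"

definition covering_radius :: "nat \<Rightarrow> ('a::{finite,field}^'n) set set \<Rightarrow> nat" where
  "covering_radius r C = Max ((\<lambda>U. Min ((\<lambda>c. dI U c) ` C)) ` Er r)"

definition KC :: "'a::{finite,field} itself \<Rightarrow> 'n::finite itself \<Rightarrow> nat \<Rightarrow> nat \<Rightarrow> nat" where
  "KC _ _ r \<rho> = Min {card C | C :: ('a::{finite,field}^'n) set set.
                        C \<subseteq> Er r \<and> C \<noteq> {} \<and> covering_radius r C \<le> \<rho>}"

definition feasible :: "'a::{finite,field} itself \<Rightarrow> 'n::finite itself \<Rightarrow> nat \<Rightarrow> nat \<Rightarrow> nat \<Rightarrow> (nat \<Rightarrow> int) \<Rightarrow> bool" where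
  "feasible ta tn r \<rho> \<delta> A \<longleftrightarrow>
     (let q = CARD('a::{finite,field}); n = CARD('n) in
     (\<forall>i<\<delta>. A i = 0) \<and>
     1 \<le> A \<delta> \<and> real_of_int (A \<delta>) \<le> NC q n r \<delta> \<and>
     (\<forall>i\<in>{\<delta>+1..r}. 0 \<le> A i \<and> real_of_int (A i) \<le> NC q n r i) \<and>
     (\<forall>l\<le>r. real_of_int (\<Sum>i=0..r. A i * (\<Sum>s=0..\<rho>. int (JC ta tn r l s i))) \<ge> NC q n r l))"

definition T :: "'a::{finite,field} itself \<Rightarrow> 'n::finite itself \<Rightarrow> nat \<Rightarrow> nat \<Rightarrow> nat \<Rightarrow> int" where
  "T ta tn r \<rho> \<delta> = Min {(\<Sum>i=0..r. A i) | A. feasible ta tn r \<rho> \<delta> A}"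

end

theory Submission
  imports Defs
begin

lemma span_Int_indep:
  fixes E :: "('a::field^'n) set"
  assumes "vec.independent E" "A \<subseteq> E" "B \<subseteq> E"
  shows "vec.span A \<inter> vec.span B = vec.span (A \<inter> B)"
proof -
  have fE: "finite E" using assms(1) vec.finiteI_independent by blast
  have iA: "vec.independent A" "vec.independent B" "vec.independent (A \<union> B)" "vec.independent (A \<inter> B)"
    using assms vec.independent_mono by (metis Int_lower1 le_sup_iff subset_trans)+
  have fin: "finite A" "finite B" using fE assms finite_subset by blast+
  have "vec.dim {x + y |x y. x \<in> vec.span A \<and> y \<in> vec.span B} + vec.dim (vec.span A \<inter> vec.span B)
      = vec.dim (vec.span A) + vec.dim (vec.span B)"
    by (rule vec.dim_sums_Int) auto
  then have "card (A \<union> B) + vec.dim (vec.span A \<inter> vec.span B) = card A + card B"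
    using iA by (simp add: vec.span_Un[symmetric] vec.dim_span_eq_card_independent vec.dim_eq_card_independent)
  then have d: "vec.dim (vec.span A \<inter> vec.span B) = card (A \<inter> B)"
    using card_Un_Int[OF fin] by simp
  show ?thesis
  proof (rule vec.subspace_dim_equal[symmetric])
    show "vec.subspace (vec.span (A \<inter> B))" by simp
    show "vec.subspace (vec.span A \<inter> vec.span B)" by (simp add: vec.subspace_inter)
    show "vec.span (A \<inter> B) \<subseteq> vec.span A \<inter> vec.span B" by (simp add: vec.span_mono)
    show "vec.dim (vec.span A \<inter> vec.span B) \<le> vec.dim (vec.span (A \<inter> B))"
      using d iA by (simp add: vec.dim_span_eq_card_independent vec.dim_eq_card_independent)
  qed
qed

lemma dim_sum_Int:
  fixes U V :: "('a::field^'n) set"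
  assumes "vec.subspace U" "vec.subspace V"
  shows "vec.dim (vec.span (U \<union> V)) + vec.dim (U \<inter> V) = vec.dim U + vec.dim V"
proof -
  have sp: "vec.span U = U" "vec.span V = V" using assms by (simp_all add: vec.span_eq_iff)
  have "vec.span (U \<union> V) = {x + y |x y. x \<in> U \<and> y \<in> V}" using vec.span_Un[of U V] unfolding sp .
  then show ?thesis using vec.dim_sums_Int[OF assms] by simp
qed

lemma dI_Er:
  fixes U V :: "('a::{finite,field}^'n) set"
  assumes "U \<in> Er r" "V \<in> Er r"
  shows "dI U V = r - vec.dim (U \<inter> V)" "vec.dim (U \<inter> V) \<le> r"
proof -
  have s: "vec.subspace U" "vec.subspace V" "vec.dim U = r" "vec.dim V = r" using assms by (auto simp: Er_def)
  show "vec.dim (U \<inter> V) \<le> r" using vec.dim_subset[of "U \<inter> V" U] s by auto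
  then show "dI U V = r - vec.dim (U \<inter> V)"
    using dim_sum_Int[OF s(1,2)] s unfolding dI_def by simp
qed

lemma dI_sym: "U \<in> Er r \<Longrightarrow> V \<in> Er r \<Longrightarrow> dI U V = dI V U"
  by (simp add: dI_Er Int_commute)

lemma dI_refl: "U \<in> Er r \<Longrightarrow> dI U U = 0"
  by (simp add: dI_Er Er_def)

lemma dI_le: "U \<in> Er r \<Longrightarrow> V \<in> Er r \<Longrightarrow> dI U V \<le> r"
  by (simp add: dI_Er)

lemma dI_eq0: "U \<in> Er r \<Longrightarrow> V \<in> Er r \<Longrightarrow> dI U V = 0 \<Longrightarrow> U = V"
proof -
  assume a: "U \<in> Er r" "V \<in> Er r" "dI U V = 0"
  then have d: "vec.dim (U \<inter> V) = r" using dI_Er[OF a(1,2)] by simp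
  have s: "vec.subspace U" "vec.subspace V" "vec.dim U = r" "vec.dim V = r" using a by (auto simp: Er_def)
  have "U \<inter> V = U" by (rule vec.subspace_dim_equal) (use s d in \<open>auto simp: vec.subspace_inter\<close>)
  moreover have "U \<inter> V = V" by (rule vec.subspace_dim_equal) (use s d in \<open>auto simp: vec.subspace_inter\<close>)
  ultimately show "U = V" by simp
qed

lemma dI_triangle:
  assumes "U \<in> Er r" "V \<in> Er r" "W \<in> Er r"
  shows "dI U W \<le> dI U V + dI V W"
proof -
  have s: "vec.subspace U" "vec.subspace V" "vec.subspace W" "vec.dim V = r"
    using assms by (auto simp: Er_def)
  have "vec.dim (vec.span ((U \<inter> V) \<union> (V \<inter> W))) + vec.dim ((U \<inter> V) \<inter> (V \<inter> W))
     = vec.dim (U \<inter> V) + vec.dim (V \<inter> W)"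
    by (rule dim_sum_Int) (use s in \<open>auto simp: vec.subspace_inter\<close>)
  moreover have "vec.dim (vec.span ((U \<inter> V) \<union> (V \<inter> W))) \<le> r"
    using vec.dim_subset[of "vec.span ((U \<inter> V) \<union> (V \<inter> W))" V] s
    by (metis Int_lower2 inf_le1 le_supI vec.span_minimal)
  moreover have "vec.dim ((U \<inter> V) \<inter> (V \<inter> W)) \<le> vec.dim (U \<inter> W)"
    by (rule vec.dim_subset) auto
  ultimately show ?thesis using dI_Er[OF assms(1,2)] dI_Er[OF assms(2,3)] dI_Er[OF assms(1,3)] by linarith
qed


definition linb :: "('a::field^'n \<Rightarrow> 'a^'n) \<Rightarrow> bool" where
  "linb f \<longleftrightarrow> Vector_Spaces.linear (*s) (*s) f \<and> bij f"

lemma linb_inv: "linb f \<Longrightarrow> linb (inv f)"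
  unfolding linb_def using vec.inj_linear_imp_inv_linear bij_imp_bij_inv bij_is_inj by blast

lemma linb_span: "linb f \<Longrightarrow> vec.span (f ` S) = f ` vec.span S"
  unfolding linb_def by (simp add: vec.linear_span_image)

lemma linb_subspace: "linb f \<Longrightarrow> vec.subspace S \<Longrightarrow> vec.subspace (f ` S)"
  unfolding linb_def by (simp add: vec.linear_subspace_image)

lemma linb_dim: "linb f \<Longrightarrow> vec.dim (f ` S) = vec.dim S"
  unfolding linb_def by (meson bij_is_inj inj_on_subset subset_UNIV vec.dim_image_eq)

lemma linb_Er: "linb f \<Longrightarrow> U \<in> Er r \<Longrightarrow> f ` U \<in> Er r"
  unfolding Er_def by (simp add: linb_subspace linb_dim)

lemma linb_dI: "linb f \<Longrightarrow> dI (f ` U) (f ` V) = dI U V"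
  unfolding dI_def by (simp add: linb_dim image_Un[symmetric] linb_span)

lemma linb_image_inv: "linb f \<Longrightarrow> f ` (inv f ` W) = W"
  unfolding linb_def by (simp add: bij_image_Collect_eq bij_is_surj image_inv_f_f surj_f_inv_f image_image)

lemma linb_count:
  assumes f: "linb f"
  shows "card {W \<in> Er r. P (dI W U) (dI W V)} = card {W \<in> Er r. P (dI W (f ` U)) (dI W (f ` V))}"
proof -
  have inj: "inj f" using f unfolding linb_def by (simp add: bij_is_inj)
  have "bij_betw ((`) f) {W \<in> Er r. P (dI W U) (dI W V)} {W \<in> Er r. P (dI W (f ` U)) (dI W (f ` V))}"
  proof (rule bij_betw_imageI)
    show "inj_on ((`) f) {W \<in> Er r. P (dI W U) (dI W V)}"
      using inj by (meson inj_image_eq_iff inj_onI)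
    show "(`) f ` {W \<in> Er r. P (dI W U) (dI W V)} = {W \<in> Er r. P (dI W (f ` U)) (dI W (f ` V))}"
    proof safe
      fix W assume "W \<in> Er r" "P (dI W U) (dI W V)"
      then show "f ` W \<in> Er r" "P (dI (f ` W) (f ` U)) (dI (f ` W) (f ` V))"
        using f by (auto simp: linb_Er linb_dI)
    next
      fix W assume W: "W \<in> Er r" "P (dI W (f ` U)) (dI W (f ` V))"
      have e: "W = f ` (inv f ` W)" using linb_image_inv[OF f] by simp
      have "inv f ` W \<in> Er r" using W linb_Er linb_inv f by blast
      moreover have "P (dI (inv f ` W) U) (dI (inv f ` W) V)"
        using W(2) e linb_dI[OF f, of "inv f ` W"] by metis
      ultimately show "W \<in> (`) f ` {W \<in> Er r. P (dI W U) (dI W V)}" using e by blast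
    qed
  qed
  then show ?thesis by (rule bij_betw_same_card)
qed


lemma subspace_span_eq: "vec.subspace S \<Longrightarrow> vec.span S = S"
  by (simp add: vec.span_eq_iff)

lemma adapted:
  fixes U V :: "('a::field^'n) set"
  assumes sU: "vec.subspace U" and sV: "vec.subspace V"
  obtains E D1 D2 where "vec.independent E" "vec.span E = UNIV" "D1 \<subseteq> E" "D2 \<subseteq> E"
    "card D1 = vec.dim U" "card D2 = vec.dim V" "card (D1 \<inter> D2) = vec.dim (U \<inter> V)"
    "U = vec.span D1" "V = vec.span D2"
proof -
  obtain B0 where B0: "B0 \<subseteq> U \<inter> V" "vec.independent B0" "U \<inter> V \<subseteq> vec.span B0" "card B0 = vec.dim (U \<inter> V)"
    using vec.basis_exists by blast
  obtain D1 where D1: "B0 \<subseteq> D1" "D1 \<subseteq> U" "vec.independent D1" "U \<subseteq> vec.span D1"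
    using vec.maximal_independent_subset_extend[of B0 U] B0 by auto
  obtain D2 where D2: "B0 \<subseteq> D2" "D2 \<subseteq> V" "vec.independent D2" "V \<subseteq> vec.span D2"
    using vec.maximal_independent_subset_extend[of B0 V] B0 by auto
  have fin: "finite D1" "finite D2" "finite B0" using D1 D2 B0 vec.finiteI_independent by auto
  have cD: "card D1 = vec.dim U" "card D2 = vec.dim V"
    using D1 D2 vec.basis_card_eq_dim by blast+
  have spD: "vec.span D1 = U" "vec.span D2 = V"
    using D1 D2 sU sV by (metis subspace_span_eq subset_antisym vec.span_mono)+
  have Beq: "D1 \<inter> D2 = B0"
  proof (rule vec.spanning_subset_independent)
    show "vec.independent (D1 \<inter> D2)" using D1 vec.independent_mono by blast
    show "B0 \<subseteq> D1 \<inter> D2" using D1 D2 by auto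
    show "D1 \<inter> D2 \<subseteq> vec.span B0" using D1 D2 B0 by blast
  qed
  have cU: "card (D1 \<union> D2) = vec.dim (vec.span (U \<union> V))"
  proof -
    have "card (D1 \<union> D2) + card B0 = card D1 + card D2" using card_Un_Int[OF fin(1,2)] Beq by simp
    then show ?thesis using dim_sum_Int[OF sU sV] cD B0(4) by linarith
  qed
  have spU: "vec.span (D1 \<union> D2) = vec.span (U \<union> V)"
  proof -
    have "vec.span (D1 \<union> D2) = {x+y |x y. x \<in> vec.span D1 \<and> y \<in> vec.span D2}" by (rule vec.span_Un)
    also have "\<dots> = {x+y |x y. x \<in> vec.span U \<and> y \<in> vec.span V}" unfolding spD subspace_span_eq[OF sU] subspace_span_eq[OF sV] ..
    also have "\<dots> = vec.span (U \<union> V)" by (rule vec.span_Un[symmetric])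
    finally show ?thesis .
  qed
  have iU: "vec.independent (D1 \<union> D2)"
  proof -
    have "D1 \<union> D2 \<subseteq> vec.span (U \<union> V)" using D1 D2 by (meson le_supI le_supI1 le_supI2 subset_trans vec.span_superset)
    then show ?thesis using vec.card_eq_dim[of "D1 \<union> D2" "vec.span (U \<union> V)"] cU fin spU
      by (simp add: vec.span_superset)
  qed
  obtain E where E: "D1 \<union> D2 \<subseteq> E" "vec.independent E" "UNIV \<subseteq> vec.span E"
    using vec.maximal_independent_subset_extend[of "D1 \<union> D2" UNIV] iU by auto
  show ?thesis
    by (rule that[of E D1 D2]) (use E cD Beq B0 spD in auto)
qed


lemma bij_glue:
  assumes "bij_betw f A A'" "bij_betw g B B'" "A \<inter> B = {}" "A' \<inter> B' = {}"
  shows "bij_betw (\<lambda>x. if x \<in> A then f x else g x) (A \<union> B) (A' \<union> B')"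
proof (rule bij_betw_combine)
  show "bij_betw (\<lambda>x. if x \<in> A then f x else g x) A A'"
    using assms(1) by (rule bij_betw_cong[THEN iffD1, rotated]) simp
  show "bij_betw (\<lambda>x. if x \<in> A then f x else g x) B B'"
    using assms(2) by (rule bij_betw_cong[THEN iffD1, rotated]) (use assms(3) in auto)
qed (use assms(4) in auto)

lemma ex_bij_card: "finite A \<Longrightarrow> finite B \<Longrightarrow> card A = card B \<Longrightarrow> \<exists>f. bij_betw f A B"
  using bij_betw_iff_card by blast

lemma bij_pieces:
  assumes fin: "finite E" "finite E'" and sub: "D1 \<subseteq> E" "D2 \<subseteq> E" "D1' \<subseteq> E'" "D2' \<subseteq> E'"
    and c: "card E = card E'" "card D1 = card D1'" "card D2 = card D2'" "card (D1 \<inter> D2) = card (D1' \<inter> D2')"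
  shows "\<exists>h. bij_betw h E E' \<and> h ` D1 = D1' \<and> h ` D2 = D2'"
proof -
  have f: "finite D1" "finite D2" "finite D1'" "finite D2'" using fin sub by (auto intro: finite_subset)
  obtain h0 where h0: "bij_betw h0 (D1 \<inter> D2) (D1' \<inter> D2')"
    using ex_bij_card[OF finite_Int finite_Int c(4)] f by blast
  have "card (D1 - D2) = card (D1' - D2')"
    using f c(2,4) by (simp add: card_Diff_subset_Int)
  then obtain h1 where h1: "bij_betw h1 (D1 - D2) (D1' - D2')"
    using ex_bij_card[of "D1 - D2" "D1' - D2'"] f by blast
  have "card (D2 - D1) = card (D2' - D1')"
    using f c(3,4) by (simp add: card_Diff_subset_Int Int_commute)
  then obtain h2 where h2: "bij_betw h2 (D2 - D1) (D2' - D1')"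
    using ex_bij_card[of "D2 - D1" "D2' - D1'"] f by blast
  have "card (D1 \<union> D2) = card (D1' \<union> D2')"
    using card_Un_Int[OF f(1,2)] card_Un_Int[OF f(3,4)] c(2,3,4) by linarith
  then have "card (E - (D1 \<union> D2)) = card (E' - (D1' \<union> D2'))"
    using sub f c(1) by (simp add: card_Diff_subset)
  then obtain h3 where h3: "bij_betw h3 (E - (D1 \<union> D2)) (E' - (D1' \<union> D2'))"
    using ex_bij_card[of "E - (D1 \<union> D2)" "E' - (D1' \<union> D2')"] fin by blast
  define k1 where "k1 = (\<lambda>x. if x \<in> D1 \<inter> D2 then h0 x else h1 x)"
  have k1: "bij_betw k1 ((D1 \<inter> D2) \<union> (D1 - D2)) ((D1' \<inter> D2') \<union> (D1' - D2'))"
    unfolding k1_def by (rule bij_glue[OF h0 h1]) auto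
  define k2 where "k2 = (\<lambda>x. if x \<in> (D1 \<inter> D2) \<union> (D1 - D2) then k1 x else h2 x)"
  have k2: "bij_betw k2 (((D1 \<inter> D2) \<union> (D1 - D2)) \<union> (D2 - D1)) (((D1' \<inter> D2') \<union> (D1' - D2')) \<union> (D2' - D1'))"
    unfolding k2_def by (rule bij_glue[OF k1 h2]) auto
  define k3 where "k3 = (\<lambda>x. if x \<in> ((D1 \<inter> D2) \<union> (D1 - D2)) \<union> (D2 - D1) then k2 x else h3 x)"
  have k3: "bij_betw k3 ((((D1 \<inter> D2) \<union> (D1 - D2)) \<union> (D2 - D1)) \<union> (E - (D1 \<union> D2)))
      ((((D1' \<inter> D2') \<union> (D1' - D2')) \<union> (D2' - D1')) \<union> (E' - (D1' \<union> D2')))"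
    unfolding k3_def by (rule bij_glue[OF k2 h3]) auto
  have e1: "(((D1 \<inter> D2) \<union> (D1 - D2)) \<union> (D2 - D1)) \<union> (E - (D1 \<union> D2)) = E" using sub by auto
  have e2: "(((D1' \<inter> D2') \<union> (D1' - D2')) \<union> (D2' - D1')) \<union> (E' - (D1' \<union> D2')) = E'" using sub by auto
  have b: "bij_betw k3 E E'" using k3 unfolding e1 e2 .
  have "k3 ` D1 = k3 ` (D1 \<inter> D2) \<union> k3 ` (D1 - D2)" by blast
  also have "k3 ` (D1 \<inter> D2) = h0 ` (D1 \<inter> D2)" unfolding k3_def k2_def k1_def by (intro image_cong) auto
  also have "k3 ` (D1 - D2) = h1 ` (D1 - D2)" unfolding k3_def k2_def k1_def by (intro image_cong) auto
  finally have i1: "k3 ` D1 = D1'" using h0 h1 unfolding bij_betw_def by auto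
  have "k3 ` D2 = k3 ` (D1 \<inter> D2) \<union> k3 ` (D2 - D1)" by blast
  also have "k3 ` (D1 \<inter> D2) = h0 ` (D1 \<inter> D2)" unfolding k3_def k2_def k1_def by (intro image_cong) auto
  also have "k3 ` (D2 - D1) = h2 ` (D2 - D1)" unfolding k3_def k2_def k1_def by (intro image_cong) auto
  finally have i2: "k3 ` D2 = D2'" using h0 h2 unfolding bij_betw_def by auto
  show ?thesis using b i1 i2 by blast
qed

lemma card_basis_UNIV:
  fixes E :: "('a::field^'n) set"
  assumes "vec.independent E" "vec.span E = UNIV"
  shows "card E = CARD('n)"
  using assms vec.dim_eq_card_independent vec.dim_span vec.dim_UNIV card_cart_basis
  by (metis vec.dim_span_eq_card_independent)

lemma transitive:
  fixes U V U' V' :: "('a::field^'n) set"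
  assumes s: "vec.subspace U" "vec.subspace V" "vec.subspace U'" "vec.subspace V'"
    and d: "vec.dim U = vec.dim U'" "vec.dim V = vec.dim V'" "vec.dim (U \<inter> V) = vec.dim (U' \<inter> V')"
  shows "\<exists>f. linb f \<and> f ` U = U' \<and> f ` V = V'"
proof -
  obtain E D1 D2 where E: "vec.independent E" "vec.span E = UNIV" "D1 \<subseteq> E" "D2 \<subseteq> E"
    "card D1 = vec.dim U" "card D2 = vec.dim V" "card (D1 \<inter> D2) = vec.dim (U \<inter> V)"
    "U = vec.span D1" "V = vec.span D2"
    using adapted[OF s(1,2)] by blast
  obtain E' D1' D2' where E': "vec.independent E'" "vec.span E' = UNIV" "D1' \<subseteq> E'" "D2' \<subseteq> E'"
    "card D1' = vec.dim U'" "card D2' = vec.dim V'" "card (D1' \<inter> D2') = vec.dim (U' \<inter> V')"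
    "U' = vec.span D1'" "V' = vec.span D2'"
    using adapted[OF s(3,4)] by blast
  have fin: "finite E" "finite E'" using E E' vec.finiteI_independent by auto
  obtain h where h: "bij_betw h E E'" "h ` D1 = D1'" "h ` D2 = D2'"
    using bij_pieces[OF fin E(3,4) E'(3,4)] card_basis_UNIV[OF E(1,2)] card_basis_UNIV[OF E'(1,2)] E E' d
    by metis
  define g where "g = vec.construct E h"
  have lg: "Vector_Spaces.linear (*s) (*s) g" unfolding g_def using E(1) by (rule vec.linear_construct)
  have gh: "\<And>x. x \<in> E \<Longrightarrow> g x = h x" unfolding g_def using E(1) by (simp add: vec.construct_basis)
  have gS: "\<And>S. S \<subseteq> E \<Longrightarrow> g ` vec.span S = vec.span (h ` S)"
  proof -
    fix S assume "S \<subseteq> E"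
    then have "g ` S = h ` S" using gh by (intro image_cong) auto
    then show "g ` vec.span S = vec.span (h ` S)" using vec.linear_span_image[OF lg, of S] by simp
  qed
  have "g ` UNIV = UNIV" using gS[of E] E(2) E'(2) h(1) by (simp add: bij_betw_def)
  then have "surj g" by simp
  then have "bij g" using vec.linear_surj_imp_inj[OF lg] by (simp add: bij_def)
  then have "linb g" using lg by (simp add: linb_def)
  moreover have "g ` U = U'" using gS[OF E(3)] E(8) E'(8) h(2) by simp
  moreover have "g ` V = V'" using gS[OF E(4)] E(9) E'(9) h(3) by simp
  ultimately show ?thesis by blast
qed


lemma JC_eq:
  fixes U c :: "('a::{finite,field}^'n) set"
  assumes U: "U \<in> Er r" and c: "c \<in> Er r" and i: "dI U c = i"
  shows "JC TYPE('a) TYPE('n) r l s i = card {W \<in> Er r. dI W U = l \<and> dI W c = s}"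
proof -
  define P where "P = (SOME P :: ('a^'n) set \<times> ('a^'n) set.
                 fst P \<in> Er r \<and> snd P \<in> Er r \<and> dI (fst P) (snd P) = i)"
  have "\<exists>P :: ('a^'n) set \<times> ('a^'n) set. fst P \<in> Er r \<and> snd P \<in> Er r \<and> dI (fst P) (snd P) = i"
    using U c i by (intro exI[of _ "(U, c)"]) auto
  then have "fst P \<in> Er r \<and> snd P \<in> Er r \<and> dI (fst P) (snd P) = i"
    unfolding P_def by (rule someI_ex)
  then have P: "fst P \<in> Er r" "snd P \<in> Er r" "dI (fst P) (snd P) = i" by auto
  have J: "JC TYPE('a) TYPE('n) r l s i = card {W \<in> Er r. dI W (fst P) = l \<and> dI W (snd P) = s}"
    unfolding JC_def P_def Let_def by simp
  have d1: "vec.dim (fst P \<inter> snd P) = vec.dim (U \<inter> c)"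
    using dI_Er[OF P(1,2)] dI_Er[OF U c] P(3) i by linarith
  obtain f where f: "linb f" "f ` fst P = U" "f ` snd P = c"
    using transitive[of "fst P" "snd P" U c] P U c d1 by (auto simp: Er_def)
  show ?thesis using J linb_count[OF f(1), of r "\<lambda>a b. a = l \<and> b = s" "fst P" "snd P"] f by simp
qed

lemma span_sub_Er:
  fixes E :: "('a::{finite,field}^'n) set"
  assumes "vec.independent E" "A \<subseteq> E"
  shows "vec.span A \<in> Er (card A)"
  using assms unfolding Er_def
  by (simp add: vec.dim_eq_card_independent vec.independent_mono)

lemma dI_sub:
  fixes E :: "('a::{finite,field}^'n) set"
  assumes E: "vec.independent E" and A: "A \<subseteq> E" "card A = r" and B: "B \<subseteq> E" "card B = r"
  shows "dI (vec.span A) (vec.span B) = r - card (A \<inter> B)"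
proof -
  have "vec.span A \<in> Er r" "vec.span B \<in> Er r" using span_sub_Er[OF E A(1)] span_sub_Er[OF E B(1)] A B by auto
  then have "dI (vec.span A) (vec.span B) = r - vec.dim (vec.span A \<inter> vec.span B)" by (rule dI_Er)
  also have "vec.span A \<inter> vec.span B = vec.span (A \<inter> B)" by (rule span_Int_indep[OF E A(1) B(1)])
  also have "vec.dim (vec.span (A \<inter> B)) = card (A \<inter> B)"
    using E A B by (meson inf.coboundedI1 vec.dim_span_eq_card_independent vec.independent_mono)
  finally show ?thesis .
qed

lemma adapted_Er:
  fixes U V :: "('a::{finite,field}^'n) set"
  assumes "U \<in> Er r" "V \<in> Er r"
  obtains E D1 D2 where "vec.independent E" "card E = CARD('n)" "D1 \<subseteq> E" "D2 \<subseteq> E"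
    "card D1 = r" "card D2 = r" "card (D1 \<inter> D2) = r - dI U V"
    "U = vec.span D1" "V = vec.span D2"
proof -
  obtain E D1 D2 where E: "vec.independent E" "vec.span E = UNIV" "D1 \<subseteq> E" "D2 \<subseteq> E"
    "card D1 = vec.dim U" "card D2 = vec.dim V" "card (D1 \<inter> D2) = vec.dim (U \<inter> V)"
    "U = vec.span D1" "V = vec.span D2"
    using adapted[of U V] assms by (auto simp: Er_def)
  show ?thesis
    by (rule that[of E D1 D2]) (use E card_basis_UNIV[OF E(1,2)] assms dI_Er[OF assms] in \<open>auto simp: Er_def\<close>)
qed

lemma step_toward:
  fixes U c :: "('a::{finite,field}^'n) set"
  assumes U: "U \<in> Er r" and c: "c \<in> Er r" and k: "dI U c = k" "0 < k"
  shows "\<exists>W \<in> Er r. dI U W = 1 \<and> dI W c = k - 1"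
proof -
  obtain E D1 D2 where E: "vec.independent E" "card E = CARD('n)" "D1 \<subseteq> E" "D2 \<subseteq> E"
    "card D1 = r" "card D2 = r" "card (D1 \<inter> D2) = r - dI U c"
    "U = vec.span D1" "c = vec.span D2" using adapted_Er[OF U c] by blast
  have kr: "k \<le> r" using dI_le[OF U c] k by simp
  have fE: "finite E" using E vec.finiteI_independent by blast
  have fin: "finite D1" "finite D2" using E(3,4) fE finite_subset by auto
  have "card (D1 - D2) = k" using card_Diff_subset_Int[of D1 D2] fin E k kr by simp
  then have "0 < card (D1 - D2)" using k by simp
  then have "D1 - D2 \<noteq> {}" using card_gt_0_iff by blast
  then obtain x where x: "x \<in> D1" "x \<notin> D2" by blast
  have "card (D2 - D1) = k" using card_Diff_subset_Int[of D2 D1] fin E k kr by (simp add: Int_commute)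
  then have "0 < card (D2 - D1)" using k by simp
  then have "D2 - D1 \<noteq> {}" using card_gt_0_iff by blast
  then obtain y where y: "y \<in> D2" "y \<notin> D1" by blast
  define A where "A = insert y (D1 - {x})"
  have r0: "0 < r" using kr k by simp
  have A: "A \<subseteq> E" "card A = r" using E x y fin r0 unfolding A_def by (auto simp: card_insert_if)
  have W: "vec.span A \<in> Er r" using span_sub_Er[OF E(1) A(1)] A by simp
  have "A \<inter> D1 = D1 - {x}" using y unfolding A_def by auto
  then have "dI U (vec.span A) = 1" using dI_sub[OF E(1) E(3,5) A] E(5,8) fin x r0 by (simp add: Int_commute)
  moreover have "A \<inter> D2 = insert y (D1 \<inter> D2)" using y x unfolding A_def by auto
  then have "dI (vec.span A) c = k - 1" using dI_sub[OF E(1) A E(4,6)] E(7,9) fin x y k kr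
    by (simp add: card_insert_if)
  ultimately show ?thesis using W by blast
qed

lemma step_away:
  fixes U c :: "('a::{finite,field}^'n) set"
  assumes U: "U \<in> Er r" and c: "c \<in> Er r" and i: "dI U c = i" "i < r" and n: "2 * r \<le> CARD('n)"
  shows "\<exists>c' \<in> Er r. dI c c' = 1 \<and> dI U c' = i + 1"
proof -
  obtain E D1 D2 where E: "vec.independent E" "card E = CARD('n)" "D1 \<subseteq> E" "D2 \<subseteq> E"
    "card D1 = r" "card D2 = r" "card (D1 \<inter> D2) = r - dI U c"
    "U = vec.span D1" "c = vec.span D2" using adapted_Er[OF U c] by blast
  have fE: "finite E" using E vec.finiteI_independent by blast
  have fin: "finite D1" "finite D2" using E(3,4) fE finite_subset by auto
  have "card (D1 \<union> D2) = r + i" using card_Un_Int[OF fin] E i by simp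
  then have "card (D1 \<union> D2) < card E" using i n E by simp
  moreover have "card (E - (D1 \<union> D2)) = card E - card (D1 \<union> D2)" using E(3,4) fE by (simp add: card_Diff_subset)
  ultimately have "0 < card (E - (D1 \<union> D2))" by simp
  then have "E - (D1 \<union> D2) \<noteq> {}" using card_gt_0_iff by blast
  then obtain e where e: "e \<in> E" "e \<notin> D1 \<union> D2" by blast
  have "card (D1 \<inter> D2) > 0" using E i by simp
  then have "D1 \<inter> D2 \<noteq> {}" by auto
  then obtain x where x: "x \<in> D1" "x \<in> D2" by blast
  define A where "A = insert e (D2 - {x})"
  have r0: "0 < card D2" using x fin card_gt_0_iff by blast
  then have A: "A \<subseteq> E" "card A = r" using E x e fin unfolding A_def by (auto simp: card_insert_if)
  have W: "vec.span A \<in> Er r" using span_sub_Er[OF E(1) A(1)] A by simp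
  have "D2 \<inter> A = D2 - {x}" using e unfolding A_def by auto
  then have "dI c (vec.span A) = 1" using dI_sub[OF E(1) E(4,6) A] fin x E(6,9) r0 by simp
  moreover have "D1 \<inter> A = (D1 \<inter> D2) - {x}" using e unfolding A_def by auto
  then have "dI U (vec.span A) = i + 1" using dI_sub[OF E(1) E(3,5) A] E(7,8) fin x i
    by (simp add: card_Diff_singleton)
  ultimately show ?thesis using W by blast
qed


lemma card_span_indep:
  fixes B :: "('a::{finite,field}^'n) set"
  assumes "vec.independent B"
  shows "card (vec.span B) = CARD('a) ^ card B"
proof -
  have "finite B" using assms vec.finiteI_independent by blast
  then show ?thesis using assms
  proof (induction B rule: finite_induct)
    case empty
    then show ?case by simp
  next
    case (insert x F)
    have xF: "x \<notin> vec.span F" "vec.independent F"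
      using insert.prems insert.hyps(2) vec.independent_insert[of x F] by auto
    have eq: "vec.span (insert x F) = (\<lambda>(a, s). a *s x + s) ` (UNIV \<times> vec.span F)"
    proof -
      have "vec.span (insert x F) = {y. \<exists>k. y - k *s x \<in> vec.span F}" by (rule vec.span_insert)
      also have "\<dots> = (\<lambda>(a, s). a *s x + s) ` (UNIV \<times> vec.span F)"
      proof safe
        fix y k assume "y - k *s x \<in> vec.span F"
        then show "y \<in> (\<lambda>(a, s). a *s x + s) ` (UNIV \<times> vec.span F)"
          by (intro image_eqI[of _ _ "(k, y - k *s x)"]) auto
      next
        fix a s assume "s \<in> vec.span F"
        then show "\<exists>k. a *s x + s - k *s x \<in> vec.span F" by (intro exI[of _ a]) simp
      qed
      finally show ?thesis .
    qed
    have inj: "inj_on (\<lambda>(a, s). a *s x + s) (UNIV \<times> vec.span F)"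
    proof (rule inj_onI, clarsimp)
      fix a s b t assume st: "s \<in> vec.span F" "t \<in> vec.span F" and e: "a *s x + s = b *s x + t"
      have "(a - b) *s x = t - s" using e by (simp add: algebra_simps vector_sub_rdistrib)
      moreover have "t - s \<in> vec.span F" using st by (simp add: vec.span_diff)
      ultimately have "a = b"
        using xF(1) by (metis eq_iff_diff_eq_0 vec.span_scale vector_smult_assoc vec.scale_one
            field_class.field_inverse)
      then show "a = b \<and> s = t" using e by simp
    qed
    have "card (vec.span (insert x F)) = card (UNIV :: 'a set) * card (vec.span F)"
      unfolding eq card_image[OF inj] card_cartesian_product ..
    then show ?case using insert xF by simp
  qed
qed

lemma card_span:
  fixes X :: "('a::{finite,field}^'n) set"
  shows "card (vec.span X) = CARD('a) ^ vec.dim X"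
proof -
  obtain B where B: "B \<subseteq> vec.span X" "vec.independent B" "vec.span X \<subseteq> vec.span B" "card B = vec.dim (vec.span X)"
    using vec.basis_exists by blast
  have "vec.span B = vec.span X"
    using B by (meson subset_antisym vec.span_minimal vec.subspace_span)
  then show ?thesis using card_span_indep[OF B(2)] B(4) by simp
qed


definition seqs :: "('a::field^'n) set \<Rightarrow> ('a^'n) set \<Rightarrow> nat \<Rightarrow> ('a^'n) list set" where
  "seqs S B k = {xs. length xs = k \<and> set xs \<subseteq> S \<and> (\<forall>i<k. xs ! i \<notin> vec.span (B \<union> set (take i xs)))}"

lemma seqs_0: "seqs S B 0 = {[]}"
  unfolding seqs_def by auto

lemma seqs_Suc:
  "seqs S B (Suc k) = (\<lambda>(xs, x). xs @ [x]) ` (SIGMA xs:seqs S B k. S - vec.span (B \<union> set xs))"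
proof safe
  fix ys assume ys: "ys \<in> seqs S B (Suc k)"
  then have l: "length ys = Suc k" by (simp add: seqs_def)
  then obtain xs x where e: "ys = xs @ [x]" by (metis length_Suc_conv_rev)
  have lx: "length xs = k" using l e by simp
  have "xs \<in> seqs S B k"
    unfolding seqs_def
  proof (intro CollectI conjI allI impI)
    show "length xs = k" "set xs \<subseteq> S" using ys lx unfolding seqs_def e by auto
    fix i assume i: "i < k"
    have "ys ! i \<notin> vec.span (B \<union> set (take i ys))" using ys i by (simp add: seqs_def)
    then show "xs ! i \<notin> vec.span (B \<union> set (take i xs))" using i lx unfolding e by (simp add: nth_append)
  qed
  moreover have "x \<in> S - vec.span (B \<union> set xs)"
    using ys lx unfolding seqs_def e by (auto dest!: spec[of _ k] simp: nth_append)
  ultimately show "ys \<in> (\<lambda>(xs, x). xs @ [x]) ` (SIGMA xs:seqs S B k. S - vec.span (B \<union> set xs))"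
    using e by force
next
  fix xs x assume xs: "xs \<in> seqs S B k" and x: "x \<in> S" "x \<notin> vec.span (B \<union> set xs)"
  have lx: "length xs = k" using xs by (simp add: seqs_def)
  show "xs @ [x] \<in> seqs S B (Suc k)"
    unfolding seqs_def
  proof (intro CollectI conjI allI impI)
    show "length (xs @ [x]) = Suc k" using lx by simp
    show "set (xs @ [x]) \<subseteq> S" using xs x by (auto simp: seqs_def)
    fix i assume i: "i < Suc k"
    show "(xs @ [x]) ! i \<notin> vec.span (B \<union> set (take i (xs @ [x])))"
    proof (cases "i < k")
      case True
      then show ?thesis using xs lx by (auto simp: seqs_def nth_append)
    next
      case False
      then have "i = k" using i by simp
      then show ?thesis using x lx by (simp add: nth_append)
    qed
  qed
qed

lemma finite_seqs: "finite (seqs (S :: ('a::{finite,field}^'n) set) B k)"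
proof -
  have "seqs S B k \<subseteq> {xs. set xs \<subseteq> UNIV \<and> length xs = k}" by (auto simp: seqs_def)
  then show ?thesis using finite_lists_length_eq[of "UNIV :: ('a^'n) set" k] finite_subset by auto
qed

lemma dim_seqs:
  fixes B B' :: "('a::field^'n) set"
  assumes xs: "xs \<in> seqs S B k" and B': "B' \<subseteq> vec.span B" and i: "i \<le> k"
  shows "vec.dim (B' \<union> set (take i xs)) = vec.dim B' + i"
  using i
proof (induction i)
  case 0
  then show ?case by simp
next
  case (Suc i)
  have l: "length xs = k" using xs by (simp add: seqs_def)
  have tk: "take (Suc i) xs = take i xs @ [xs ! i]" using Suc.prems l by (simp add: take_Suc_conv_app_nth)
  have n: "xs ! i \<notin> vec.span (B \<union> set (take i xs))" using xs Suc.prems by (simp add: seqs_def)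
  have "vec.span (B' \<union> set (take i xs)) \<subseteq> vec.span (B \<union> set (take i xs))"
  proof -
    have "B' \<union> set (take i xs) \<subseteq> vec.span (B \<union> set (take i xs))"
      using B' vec.span_mono[of B "B \<union> set (take i xs)"] vec.span_superset[of "B \<union> set (take i xs)"] by auto
    then show ?thesis using vec.span_mono vec.span_span by metis
  qed
  then have "xs ! i \<notin> vec.span (B' \<union> set (take i xs))" using n by blast
  then have "vec.dim (insert (xs ! i) (B' \<union> set (take i xs))) = vec.dim (B' \<union> set (take i xs)) + 1"
    by (simp add: vec.dim_insert)
  then show ?case using Suc tk by simp
qed

lemma card_seqs:
  fixes S B :: "('a::{finite,field}^'n) set"
  assumes S: "vec.subspace S" and B: "B \<subseteq> S"
  shows "card (seqs S B k) = (\<Prod>i<k. CARD('a) ^ vec.dim S - CARD('a) ^ (vec.dim B + i))"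
proof (induction k)
  case 0
  then show ?case by (simp add: seqs_0)
next
  case (Suc k)
  have inj: "inj_on (\<lambda>(xs, x). xs @ [x]) (SIGMA xs:seqs S B k. S - vec.span (B \<union> set xs))"
    by (rule inj_onI) auto
  have c: "card (S - vec.span (B \<union> set xs)) = CARD('a) ^ vec.dim S - CARD('a) ^ (vec.dim B + k)"
    if xs: "xs \<in> seqs S B k" for xs
  proof -
    have sub: "vec.span (B \<union> set xs) \<subseteq> S"
      using xs B S by (intro vec.span_minimal) (auto simp: seqs_def)
    have "vec.dim (B \<union> set xs) = vec.dim B + k"
      using dim_seqs[OF xs vec.span_superset, of k] xs by (simp add: seqs_def)
    then have "card (vec.span (B \<union> set xs)) = CARD('a) ^ (vec.dim B + k)" by (simp add: card_span)
    moreover have "card S = CARD('a) ^ vec.dim S" using card_span[of S] S by (simp add: subspace_span_eq)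
    ultimately show ?thesis using sub by (simp add: card_Diff_subset)
  qed
  have "card (seqs S B (Suc k)) = card (SIGMA xs:seqs S B k. S - vec.span (B \<union> set xs))"
    unfolding seqs_Suc by (rule card_image[OF inj])
  also have "\<dots> = (\<Sum>xs\<in>seqs S B k. card (S - vec.span (B \<union> set xs)))"
    by (rule card_SigmaI) (auto simp: finite_seqs)
  also have "\<dots> = (\<Sum>xs\<in>seqs S B k. CARD('a) ^ vec.dim S - CARD('a) ^ (vec.dim B + k))"
    using c by (rule sum.cong[OF refl])
  also have "\<dots> = card (seqs S B k) * (CARD('a) ^ vec.dim S - CARD('a) ^ (vec.dim B + k))" by simp
  finally show ?case using Suc.IH by (simp add: mult.commute)
qed


lemma span_span_Un: "vec.span (vec.span X \<union> Y) = vec.span (X \<union> Y)"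
proof (rule subset_antisym)
  show "vec.span (vec.span X \<union> Y) \<subseteq> vec.span (X \<union> Y)"
    by (rule vec.span_minimal) (auto intro: vec.span_mono[THEN subsetD] vec.span_superset[THEN subsetD])
  show "vec.span (X \<union> Y) \<subseteq> vec.span (vec.span X \<union> Y)"
    by (rule vec.span_mono) (use vec.span_superset[of X] in auto)
qed

lemma card_fibers:
  assumes "finite Y" "f ` X \<subseteq> Y" "finite X"
  shows "card X = (\<Sum>y\<in>Y. card {x\<in>X. f x = y})"
proof -
  have "X = (\<Union>y\<in>Y. {x\<in>X. f x = y})" using assms(2) by auto
  then have "card X = card (\<Union>y\<in>Y. {x\<in>X. f x = y})" by simp
  also have "\<dots> = (\<Sum>y\<in>Y. card {x\<in>X. f x = y})"
    by (rule card_UN_disjoint) (use assms in auto)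
  finally show ?thesis .
qed

lemma dim_UNIV_n: "vec.dim (UNIV :: ('a::field^'n::finite) set) = CARD('n)"
  by (simp add: card_cart_basis)

lemma seq_dim0:
  assumes "us \<in> seqs S {} t"
  shows "vec.dim (set us) = t"
  using dim_seqs[OF assms, of "{}" t] assms by (simp add: seqs_def)

locale cnt =
  fixes U :: "('a::{finite,field}^'n) set" and r t l :: nat
  assumes U: "U \<in> Er r" and tl: "t + l = r"
begin

definition X where "X = seqs U {} t \<times> seqs UNIV U l"
definition phi where "phi = (\<lambda>(us, ws). vec.span (set us \<union> set ws))"
definition Y where "Y = {W \<in> Er r. vec.dim (W \<inter> U) = t}"

lemma sU: "vec.subspace U" "vec.dim U = r" using U by (auto simp: Er_def)

lemma phi_Y:
  assumes p: "p \<in> X" shows "phi p \<in> Y"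
proof -
  obtain us ws where p': "p = (us, ws)" "us \<in> seqs U {} t" "ws \<in> seqs UNIV U l"
    using p unfolding X_def by auto
  have lws: "length ws = l" and usU: "set us \<subseteq> U" using p' by (auto simp: seqs_def)
  have d1: "vec.dim (set us) = t" by (rule seq_dim0[OF p'(2)])
  have "vec.dim (set us \<union> set (take l ws)) = vec.dim (set us) + l"
    by (rule dim_seqs[OF p'(3)]) (use usU vec.span_superset in auto)
  then have d2: "vec.dim (set us \<union> set ws) = r" using d1 lws tl by simp
  have "vec.dim (U \<union> set (take l ws)) = vec.dim U + l"
    by (rule dim_seqs[OF p'(3)]) (use vec.span_superset in auto)
  then have d3: "vec.dim (U \<union> set ws) = r + l" using lws sU by simp
  define W where "W = vec.span (set us \<union> set ws)"
  have sW: "vec.subspace W" "vec.dim W = r" using d2 unfolding W_def by simp_all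
  have "vec.span (W \<union> U) = vec.span (set us \<union> set ws \<union> U)" unfolding W_def by (rule span_span_Un)
  also have "set us \<union> set ws \<union> U = U \<union> set ws" using usU by auto
  finally have "vec.dim (vec.span (W \<union> U)) = r + l" using d3 by simp
  then have "vec.dim (W \<inter> U) = t" using dim_sum_Int[OF sW(1) sU(1)] sW sU tl by simp
  then show ?thesis using sW p' unfolding Y_def phi_def W_def Er_def by simp
qed

lemma fiber:
  assumes W: "W \<in> Y"
  shows "{p \<in> X. phi p = W} = seqs (W \<inter> U) {} t \<times> seqs W (W \<inter> U) l"
proof -
  have sW: "vec.subspace W" "vec.dim W = r" "vec.dim (W \<inter> U) = t" using W by (auto simp: Y_def Er_def)
  have sI: "vec.subspace (W \<inter> U)" using sW sU by (simp add: vec.subspace_inter)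
  have key: "x \<in> vec.span (U \<union> T) \<longleftrightarrow> x \<in> vec.span ((W \<inter> U) \<union> T)" if x: "x \<in> W" and T: "T \<subseteq> W" for x T
  proof
    assume "x \<in> vec.span (U \<union> T)"
    then obtain u v where uv: "x = u + v" "u \<in> vec.span U" "v \<in> vec.span T" using vec.span_Un[of U T] by auto
    have vW: "v \<in> W" using uv(3) T sW(1) by (meson subsetD vec.span_minimal)
    have "u = x - v" using uv by simp
    then have "u \<in> W" using x vW sW(1) by (simp add: vec.subspace_diff)
    moreover have "u \<in> U" using uv(2) sU(1) by (simp add: subspace_span_eq)
    ultimately have "u \<in> vec.span (W \<inter> U)" using vec.span_superset by blast
    then show "x \<in> vec.span ((W \<inter> U) \<union> T)" using uv vec.span_Un[of "W \<inter> U" T] by auto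
  next
    assume "x \<in> vec.span ((W \<inter> U) \<union> T)"
    then show "x \<in> vec.span (U \<union> T)" by (meson Int_lower2 Un_mono order_refl subsetD vec.span_mono)
  qed
  show ?thesis
  proof (intro subset_antisym subsetI)
    fix p0 assume p0: "p0 \<in> {p \<in> X. phi p = W}"
    obtain us ws where e: "p0 = (us, ws)" by (cases p0)
    have p: "(us, ws) \<in> X" "phi (us, ws) = W" using p0 e by auto
    have us: "us \<in> seqs U {} t" and ws: "ws \<in> seqs UNIV U l" using p unfolding X_def by auto
    have sub: "set us \<subseteq> W" "set ws \<subseteq> W" using p(2) unfolding phi_def by (auto intro: vec.span_superset[THEN subsetD])
    have A: "us \<in> seqs (W \<inter> U) {} t" using us sub unfolding seqs_def by auto
    have "ws \<in> seqs W (W \<inter> U) l"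
      unfolding seqs_def
    proof (intro CollectI conjI allI impI)
      show "length ws = l" using ws by (simp add: seqs_def)
      show "set ws \<subseteq> W" by (rule sub)
      fix i assume i: "i < l"
      have "ws ! i \<notin> vec.span (U \<union> set (take i ws))" using ws i by (simp add: seqs_def)
      moreover have "ws ! i \<in> W" using sub i \<open>length ws = l\<close> by auto
      moreover have "set (take i ws) \<subseteq> W" using sub by (meson set_take_subset subset_trans)
      ultimately show "ws ! i \<notin> vec.span ((W \<inter> U) \<union> set (take i ws))" using key by blast
    qed
    then show "p0 \<in> seqs (W \<inter> U) {} t \<times> seqs W (W \<inter> U) l" using A e by simp
  next
    fix p0 assume p0: "p0 \<in> seqs (W \<inter> U) {} t \<times> seqs W (W \<inter> U) l"
    obtain us ws where e: "p0 = (us, ws)" by (cases p0)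
    have us: "us \<in> seqs (W \<inter> U) {} t" and ws: "ws \<in> seqs W (W \<inter> U) l" using p0 e by auto
    have sub: "set us \<subseteq> W \<inter> U" "set ws \<subseteq> W" using us ws by (auto simp: seqs_def)
    have lws: "length ws = l" using ws by (simp add: seqs_def)
    have ws': "ws \<in> seqs UNIV U l"
      unfolding seqs_def
    proof (intro CollectI conjI allI impI)
      show "length ws = l" by (rule lws)
      show "set ws \<subseteq> UNIV" by simp
      fix i assume i: "i < l"
      have "ws ! i \<notin> vec.span ((W \<inter> U) \<union> set (take i ws))" using ws i by (simp add: seqs_def)
      moreover have "ws ! i \<in> W" using sub i lws by auto
      moreover have "set (take i ws) \<subseteq> W" using sub by (meson set_take_subset subset_trans)
      ultimately show "ws ! i \<notin> vec.span (U \<union> set (take i ws))" using key by blast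
    qed
    have us': "us \<in> seqs U {} t" using us unfolding seqs_def by auto
    have inX: "(us, ws) \<in> X" unfolding X_def using us' ws' by simp
    have d1: "vec.dim (set us) = t" by (rule seq_dim0[OF us])
    have "vec.dim (set us \<union> set (take l ws)) = vec.dim (set us) + l"
      by (rule dim_seqs[OF ws]) (use sub vec.span_superset[of "W \<inter> U"] in auto)
    then have d2: "vec.dim (set us \<union> set ws) = r" using d1 lws tl by simp
    have "vec.span (set us \<union> set ws) = W"
    proof (rule vec.subspace_dim_equal)
      show "vec.span (set us \<union> set ws) \<subseteq> W" using sub sW(1) by (intro vec.span_minimal) auto
    qed (use sW d2 in auto)
    then show "p0 \<in> {p \<in> X. phi p = W}" using inX e unfolding phi_def by simp
  qed
qed

lemma main_count:
  "card Y * ((\<Prod>i<t. CARD('a) ^ t - CARD('a) ^ i) * (\<Prod>i<l. CARD('a) ^ r - CARD('a) ^ (t + i)))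
   = (\<Prod>i<t. CARD('a) ^ r - CARD('a) ^ i) * (\<Prod>i<l. CARD('a) ^ CARD('n) - CARD('a) ^ (r + i))"
proof -
  have fY: "finite Y" by simp
  have cX: "card X = (\<Prod>i<t. CARD('a) ^ r - CARD('a) ^ i) * (\<Prod>i<l. CARD('a) ^ CARD('n) - CARD('a) ^ (r + i))"
    unfolding X_def card_cartesian_product
    using card_seqs[OF sU(1), of "{}" t] card_seqs[OF vec.subspace_UNIV, of U l] sU dim_UNIV_n[where 'a='a and 'n='n]
    by simp
  have "card X = (\<Sum>W\<in>Y. card {p\<in>X. phi p = W})"
    by (rule card_fibers) (use phi_Y in \<open>auto simp: X_def finite_seqs\<close>)
  also have "\<dots> = (\<Sum>W\<in>Y. (\<Prod>i<t. CARD('a) ^ t - CARD('a) ^ i) * (\<Prod>i<l. CARD('a) ^ r - CARD('a) ^ (t + i)))"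
  proof (rule sum.cong[OF refl])
    fix W assume W: "W \<in> Y"
    have sW: "vec.subspace W" "vec.dim W = r" "vec.dim (W \<inter> U) = t" using W by (auto simp: Y_def Er_def)
    have sI: "vec.subspace (W \<inter> U)" using sW sU by (simp add: vec.subspace_inter)
    show "card {p\<in>X. phi p = W} = (\<Prod>i<t. CARD('a) ^ t - CARD('a) ^ i) * (\<Prod>i<l. CARD('a) ^ r - CARD('a) ^ (t + i))"
      unfolding fiber[OF W] card_cartesian_product
      using card_seqs[OF sI, of "{}" t] card_seqs[OF sW(1), of "W \<inter> U" l] sW by simp
  qed
  finally show ?thesis using cX by simp
qed

end


definition rp :: "real \<Rightarrow> nat \<Rightarrow> nat \<Rightarrow> nat \<Rightarrow> real" where
  "rp Q a b k = (\<Prod>i<k. Q ^ a - Q ^ (b + i))"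

lemma prod_split_nat: "(\<Prod>i<k + j. f i) = (\<Prod>i<k. f i) * (\<Prod>i<j. f (k + i :: nat)) " for f :: "nat \<Rightarrow> real"
  by (induction j) (auto simp: mult.assoc)

lemma rp_shift: "rp Q (a + b) a j = Q ^ (a * j) * rp Q b 0 j"
proof -
  have "rp Q (a + b) a j = (\<Prod>i<j. Q ^ a * (Q ^ b - Q ^ i))"
    unfolding rp_def by (intro prod.cong) (auto simp: power_add algebra_simps)
  also have "\<dots> = Q ^ (a * j) * rp Q b 0 j"
    unfolding rp_def prod.distrib by (simp add: power_mult)
  finally show ?thesis .
qed

lemma rp_pos: "1 < Q \<Longrightarrow> 0 < rp Q k 0 k"
  unfolding rp_def by (intro prod_pos) (auto intro: power_strict_increasing)

lemma gbinom_rp: "gbinom q m k = rp (real q) m 0 k / rp (real q) k 0 k"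
  unfolding gbinom_def rp_def by (simp add: prod_dividef)

lemma gbinom_closed:
  assumes Q: "1 < real q" and k: "k \<le> m"
  shows "gbinom q m k = rp (real q) m 0 m / (real q ^ (k * (m - k)) * rp (real q) (m - k) 0 (m - k) * rp (real q) k 0 k)"
proof -
  let ?Q = "real q"
  have "rp ?Q m 0 m = rp ?Q m 0 k * rp ?Q m k (m - k)"
    using prod_split_nat[where k=k and j="m - k" and f="\<lambda>i. ?Q ^ m - ?Q ^ i"] k unfolding rp_def by (simp add: add.commute)
  also have "rp ?Q m k (m - k) = ?Q ^ (k * (m - k)) * rp ?Q (m - k) 0 (m - k)"
    using rp_shift[of ?Q k "m - k" "m - k"] k by simp
  finally have e: "rp ?Q m 0 m = rp ?Q m 0 k * (?Q ^ (k * (m - k)) * rp ?Q (m - k) 0 (m - k))" .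
  have p: "0 < rp ?Q (m - k) 0 (m - k)" "0 < rp ?Q k 0 k" "0 < ?Q ^ (k * (m - k))" using rp_pos Q by auto
  show ?thesis unfolding gbinom_rp e using p Q by (simp add: field_simps)
qed

lemma gbinom_sym:
  assumes Q: "1 < real q" and k: "k \<le> m"
  shows "gbinom q m k = gbinom q m (m - k)"
  using gbinom_closed[OF Q k] gbinom_closed[OF Q, of "m - k" m] k by (simp add: mult.commute mult.left_commute)

lemma real_prod_diff:
  assumes "\<And>i. i < k \<Longrightarrow> b + i \<le> a" and "1 \<le> q"
  shows "real (\<Prod>i<k. q ^ a - q ^ (b + i)) = rp (real q) a b k"
  unfolding rp_def of_nat_prod
  by (intro prod.cong refl) (use assms in \<open>simp add: of_nat_diff power_increasing\<close>)

lemma alg_helper: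
  fixes Y a b c d p s :: real
  assumes "0 < b" "0 < p" "0 < d" "Y * (b * (p * d)) = a * ((p * s) * c)"
  shows "Y = s * (a / b) * (c / d)"
proof -
  have "b * (p * d) \<noteq> 0" using assms by simp
  then have "Y = a * ((p * s) * c) / (b * (p * d))" using assms(4) by (simp add: eq_divide_eq)
  then show ?thesis using assms(2) by simp
qed

lemma count_NC:
  fixes U :: "('a::{finite,field}^'n) set"
  assumes U: "U \<in> Er r" and l: "l \<le> r" and n: "2 * r \<le> CARD('n)"
  shows "real (card {W \<in> Er r. vec.dim (W \<inter> U) = r - l}) = NC CARD('a) CARD('n) r l"
proof -
  let ?q = "CARD('a)" and ?n = "CARD('n)" and ?t = "r - l"
  let ?Q = "real ?q"
  interpret cnt U r ?t l using U l by unfold_locales auto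
  have "card {0::'a, 1} \<le> ?q" by (rule card_mono) auto
  then have q1: "1 < ?q" by simp
  have Q: "1 < ?Q" using q1 by simp
  have mc: "card Y * ((\<Prod>i<?t. ?q ^ ?t - ?q ^ i) * (\<Prod>i<l. ?q ^ r - ?q ^ (?t + i)))
   = (\<Prod>i<?t. ?q ^ r - ?q ^ i) * (\<Prod>i<l. ?q ^ ?n - ?q ^ (r + i))" by (rule main_count)
  have c1: "real (\<Prod>i<?t. ?q ^ ?t - ?q ^ (0 + i)) = rp ?Q ?t 0 ?t"
    by (rule real_prod_diff) (use q1 in auto)
  have c2: "real (\<Prod>i<l. ?q ^ r - ?q ^ (?t + i)) = rp ?Q r ?t l"
    by (rule real_prod_diff) (use q1 l in auto)
  have c3: "real (\<Prod>i<?t. ?q ^ r - ?q ^ (0 + i)) = rp ?Q r 0 ?t"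
    by (rule real_prod_diff) (use q1 in auto)
  have c4: "real (\<Prod>i<l. ?q ^ ?n - ?q ^ (r + i)) = rp ?Q ?n r l"
    by (rule real_prod_diff) (use q1 l n in auto)
  from mc have "real (card Y * ((\<Prod>i<?t. ?q ^ ?t - ?q ^ (0 + i)) * (\<Prod>i<l. ?q ^ r - ?q ^ (?t + i))))
   = real ((\<Prod>i<?t. ?q ^ r - ?q ^ (0 + i)) * (\<Prod>i<l. ?q ^ ?n - ?q ^ (r + i)))" by simp
  then have e1: "real (card Y) * (rp ?Q ?t 0 ?t * rp ?Q r ?t l) = rp ?Q r 0 ?t * rp ?Q ?n r l"
    unfolding of_nat_mult c1 c2 c3 c4 .
  have e2: "rp ?Q r ?t l = ?Q ^ (?t * l) * rp ?Q l 0 l" using rp_shift[of ?Q ?t l l] l by simp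
  have e3: "rp ?Q ?n r l = ?Q ^ (r * l) * rp ?Q (?n - r) 0 l" using rp_shift[of ?Q r "?n - r" l] n by simp
  have e4: "?Q ^ (r * l) = ?Q ^ (?t * l) * ?Q ^ (l\<^sup>2)"
  proof -
    obtain d where d: "r = l + d" using l le_Suc_ex by blast
    have "r * l = (r - l) * l + l\<^sup>2" unfolding d by (simp add: power2_eq_square algebra_simps)
    then show ?thesis by (simp add: power_add)
  qed
  have e5: "gbinom ?q r l = rp ?Q r 0 ?t / rp ?Q ?t 0 ?t"
    using gbinom_sym[OF Q l] gbinom_rp by simp
  have e6: "gbinom ?q (?n - r) l = rp ?Q (?n - r) 0 l / rp ?Q l 0 l" by (rule gbinom_rp)
  have p: "0 < rp ?Q ?t 0 ?t" "0 < rp ?Q l 0 l" "0 < ?Q ^ (?t * l)" using rp_pos[OF Q] Q by auto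
  have e7: "real (card Y) * (rp ?Q ?t 0 ?t * (?Q ^ (?t * l) * rp ?Q l 0 l))
      = rp ?Q r 0 ?t * ((?Q ^ (?t * l) * ?Q ^ (l\<^sup>2)) * rp ?Q (?n - r) 0 l)"
    using e1 unfolding e2 e3 e4 by (simp add: mult.assoc)
  have "real (card Y) = NC ?q ?n r l"
    unfolding NC_def e5 e6 using alg_helper[OF p(1,3,2) e7] by (simp add: mult.assoc)
  then show ?thesis unfolding Y_def .
qed


lemma count_dI:
  fixes U :: "('a::{finite,field}^'n) set"
  assumes U: "U \<in> Er r" and l: "l \<le> r" and n: "2 * r \<le> CARD('n)"
  shows "real (card {W \<in> Er r. dI W U = l}) = NC CARD('a) CARD('n) r l"
proof -
  have "{W \<in> Er r. dI W U = l} = {W \<in> Er r. vec.dim (W \<inter> U) = r - l}"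
    using dI_Er[OF _ U] l by force
  then show ?thesis using count_NC[OF U l n] by simp
qed

lemma ivt:
  fixes C :: "('a::{finite,field}^'n) set set"
  assumes C: "C \<subseteq> Er r" "C \<noteq> {}"
  shows "U \<in> Er r \<Longrightarrow> \<delta> \<le> Min ((\<lambda>c. dI U c) ` C) \<Longrightarrow> \<exists>W \<in> Er r. Min ((\<lambda>c. dI W c) ` C) = \<delta>"
proof (induction "Min ((\<lambda>c. dI U c) ` C)" arbitrary: U)
  case 0
  then show ?case by auto
next
  case (Suc m)
  have fC: "finite C" using C(1) finite_subset by auto
  show ?case
  proof (cases "\<delta> = Suc m")
    case True
    then show ?thesis using Suc by metis
  next
    case False
    then have dm: "\<delta> \<le> m" using Suc by simp
    have "Min ((\<lambda>c. dI U c) ` C) \<in> (\<lambda>c. dI U c) ` C"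
      using Min_in[of "(\<lambda>c. dI U c) ` C"] fC C(2) by auto
    then obtain c0 where c0: "c0 \<in> C" "dI U c0 = Suc m"
      using Suc.hyps(2) by (metis imageE)
    obtain W where W: "W \<in> Er r" "dI U W = 1" "dI W c0 = m"
      using step_toward[OF Suc.prems(1) _ c0(2)] c0 C(1) by auto
    have lb: "m \<le> dI W c" if c: "c \<in> C" for c
    proof -
      have "Min ((\<lambda>c. dI U c) ` C) \<le> dI U c" using c fC by simp
      then have "Suc m \<le> dI U c" using Suc.hyps(2) by simp
      moreover have "dI U c \<le> dI U W + dI W c" using dI_triangle Suc.prems(1) W(1) c C(1) by blast
      ultimately show ?thesis using W(2) by simp
    qed
    have "Min ((\<lambda>c. dI W c) ` C) = m"
    proof (rule antisym)
      show "Min ((\<lambda>c. dI W c) ` C) \<le> m" using c0 W(3) fC by (metis Min_le finite_imageI image_eqI)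
      show "m \<le> Min ((\<lambda>c. dI W c) ` C)" using lb fC C(2) by simp
    qed
    then show ?thesis using Suc.hyps(1)[of W] W(1) dm by simp
  qed
qed

lemma push_far:
  fixes U c :: "('a::{finite,field}^'n) set"
  assumes U: "U \<in> Er r" and c: "c \<in> Er r" and ij: "dI U c \<le> j" "j \<le> r" and n: "2 * r \<le> CARD('n)"
  shows "\<exists>c' \<in> Er r. dI U c' = j \<and> dI c c' \<le> j - dI U c"
  using ij
proof (induction j rule: dec_induct)
  case base
  then show ?case using c dI_refl[OF c] by auto
next
  case (step j)
  obtain c'' where c'': "c'' \<in> Er r" "dI U c'' = j" "dI c c'' \<le> j - dI U c" using step by auto
  obtain c' where c': "c' \<in> Er r" "dI c'' c' = 1" "dI U c' = j + 1"
    using step_away[OF U c''(1) c''(2) _ n] step by auto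
  have "dI c c' \<le> dI c c'' + dI c'' c'" using dI_triangle c c''(1) c'(1) by blast
  then show ?case using c' c'' step by auto
qed


lemma config:
  fixes C :: "('a::{finite,field}^'n) set set"
  assumes C: "C \<subseteq> Er r" "C \<noteq> {}" and cov: "\<forall>W \<in> Er r. Min ((\<lambda>c. dI W c) ` C) \<le> \<rho>"
    and d: "\<delta> \<le> \<rho>" "\<rho> < r" and n: "2 * r \<le> CARD('n)"
  shows "\<exists>U \<in> (Er r :: ('a^'n) set set). \<exists>C' \<subseteq> (Er r :: ('a^'n) set set). card C' \<le> card C \<and> (\<forall>W \<in> Er r. \<exists>c\<in>C'. dI W c \<le> \<rho>)
           \<and> (\<forall>c\<in>C'. \<delta> \<le> dI U c) \<and> (\<exists>c\<in>C'. dI U c = \<delta>)"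
proof -
  have fC: "finite C" using C(1) finite_subset by auto
  have fE: "finite (Er r :: ('a^'n) set set)" by (rule finite_subset[OF subset_UNIV]) simp
  have nE: "(Er r :: ('a^'n) set set) \<noteq> {}" using C by blast
  define f where "f = (\<lambda>W. Min ((\<lambda>c. dI W c) ` C))"
  define \<rho>' where "\<rho>' = Max (f ` (Er r :: ('a^'n) set set))"
  have "\<rho>' \<in> f ` (Er r :: ('a^'n) set set)" unfolding \<rho>'_def using fE nE by (intro Max_in) auto
  then obtain U0 where U0: "U0 \<in> (Er r :: ('a^'n) set set)" "f U0 = \<rho>'" by auto
  have le: "f W \<le> \<rho>'" if "W \<in> (Er r :: ('a^'n) set set)" for W unfolding \<rho>'_def using that fE by simp
  have fmin: "\<exists>c\<in>C. dI W c = f W" for W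
  proof -
    have "f W \<in> (\<lambda>c. dI W c) ` C" unfolding f_def using fC C(2) by (intro Min_in) auto
    then show ?thesis by auto
  qed
  have fle: "f W \<le> dI W c" if "c \<in> C" for W c unfolding f_def using that fC by simp
  have "f U0 \<le> \<rho>" using cov U0(1) unfolding f_def by blast
  then have rr: "\<rho>' \<le> \<rho>" using U0(2) by simp
  have covC: "\<forall>W \<in> (Er r :: ('a^'n) set set). \<exists>c\<in>C. dI W c \<le> \<rho>'"
  proof
    fix W assume W: "W \<in> (Er r :: ('a^'n) set set)"
    obtain c where "c \<in> C" "dI W c = f W" using fmin by blast
    then show "\<exists>c\<in>C. dI W c \<le> \<rho>'" using le[OF W] by (metis)
  qed
  show ?thesis
  proof (cases "\<delta> \<le> \<rho>'")
    case True
    obtain U where U: "U \<in> (Er r :: ('a^'n) set set)" "f U = \<delta>"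
      using ivt[OF C(1,2) U0(1), of \<delta>] True U0 unfolding f_def by auto
    show ?thesis
    proof (rule bexI[where x=U], rule exI[where x=C], intro conjI)
      show "C \<subseteq> (Er r :: ('a^'n) set set)" by (rule C(1))
      show "card C \<le> card C" by simp
      show "\<forall>W\<in>(Er r :: ('a^'n) set set). \<exists>c\<in>C. dI W c \<le> \<rho>" using covC rr by (meson order_trans)
      show "\<forall>c\<in>C. \<delta> \<le> dI U c" using fle U(2) by auto
      show "\<exists>c\<in>C. dI U c = \<delta>" using fmin U(2) by auto
    qed (rule U(1))
  next
    case False
    define U where "U = U0"
    define p where "p = (\<lambda>c. if dI U c < \<delta> then (SOME c'. c' \<in> (Er r :: ('a^'n) set set) \<and> dI U c' = \<delta> \<and> dI c c' \<le> \<delta> - dI U c) else c)"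
    have pc: "p c \<in> (Er r :: ('a^'n) set set) \<and> dI U (p c) = \<delta> \<and> dI c (p c) \<le> \<delta> - dI U c" if c: "c \<in> C" "dI U c < \<delta>" for c
    proof -
      have "\<exists>c'. c' \<in> (Er r :: ('a^'n) set set) \<and> dI U c' = \<delta> \<and> dI c c' \<le> \<delta> - dI U c"
      proof -
        have cE: "c \<in> (Er r :: ('a^'n) set set)" using c C(1) by blast
        have "\<delta> \<le> r" using d by simp
        moreover have "dI U0 c \<le> \<delta>" using c(2) unfolding U_def by simp
        ultimately show ?thesis using push_far[OF U0(1) cE _ _ n, of \<delta>] unfolding U_def by blast
      qed
      from someI_ex[OF this] show ?thesis using c unfolding p_def by simp
    qed
    have pEr: "p c \<in> (Er r :: ('a^'n) set set)" if "c \<in> C" for c using pc[OF that] C(1) that unfolding p_def by auto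
    show ?thesis
    proof (rule bexI[where x=U0], rule exI[where x="p ` C"], intro conjI)
      show "p ` C \<subseteq> (Er r :: ('a^'n) set set)" using pEr by auto
      show "card (p ` C) \<le> card C" using fC by (rule card_image_le)
      show "\<forall>W\<in>(Er r :: ('a^'n) set set). \<exists>c\<in>p ` C. dI W c \<le> \<rho>"
      proof
        fix W assume W: "W \<in> (Er r :: ('a^'n) set set)"
        obtain c where c: "c \<in> C" "dI W c \<le> \<rho>'" using covC W by auto
        have cE: "c \<in> (Er r :: ('a^'n) set set)" using c C(1) by auto
        have "dI W (p c) \<le> \<rho>"
        proof (cases "dI U c < \<delta>")
          case True
          have "\<rho>' \<le> dI U c" using fle[OF c(1), of U] U0(2) unfolding U_def by simp
          moreover have "dI W (p c) \<le> dI W c + dI c (p c)" using dI_triangle W cE pc[OF c(1) True] by blast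
          moreover have "dI c (p c) \<le> \<delta> - dI U c" using pc[OF c(1) True] by simp
          ultimately show ?thesis using True c(2) d by linarith
        next
          case False
          then show ?thesis using c rr unfolding p_def by auto
        qed
        then show "\<exists>c\<in>p ` C. dI W c \<le> \<rho>" using c(1) by auto
      qed
      show "\<forall>c\<in>p ` C. \<delta> \<le> dI U0 c"
      proof
        fix c' assume "c' \<in> p ` C"
        then obtain c where c: "c \<in> C" "c' = p c" by auto
        show "\<delta> \<le> dI U0 c'"
          using pc[OF c(1)] c unfolding p_def U_def by (cases "dI U0 c < \<delta>") auto
      qed
      obtain c0 where c0: "c0 \<in> C" "dI U0 c0 = \<rho>'" using fmin U0(2) by metis
      then have "dI U c0 < \<delta>" using False unfolding U_def by simp
      then have "dI U0 (p c0) = \<delta>" using pc[OF c0(1)] unfolding U_def by simp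
      then show "\<exists>c\<in>p ` C. dI U0 c = \<delta>" using c0(1) by auto
    qed (rule U0(1))
  qed
qed


lemma feas:
  fixes U :: "('a::{finite,field}^'n) set" and C' :: "('a^'n) set set"
  assumes U: "U \<in> Er r" and C': "C' \<subseteq> Er r" and cov: "\<forall>W \<in> Er r. \<exists>c\<in>C'. dI W c \<le> \<rho>"
    and lb: "\<forall>c\<in>C'. \<delta> \<le> dI U c" and ex: "\<exists>c\<in>C'. dI U c = \<delta>" and dr: "\<delta> \<le> r"
    and n: "2 * r \<le> CARD('n)"
  shows "feasible TYPE('a) TYPE('n) r \<rho> \<delta> (\<lambda>i. int (card {c\<in>C'. dI U c = i}))
         \<and> (\<Sum>i=0..r. int (card {c\<in>C'. dI U c = i})) = int (card C')"
proof -
  define a where "a = (\<lambda>i. card {c\<in>C'. dI U c = i})"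
  have fC: "finite C'" using C' finite_subset by auto
  have fE: "finite (Er r :: ('a^'n) set set)" by (rule finite_subset[OF subset_UNIV]) simp
  have a0: "a i = 0" if "i < \<delta>" for i
  proof -
    have "{c\<in>C'. dI U c = i} = {}" using lb that by force
    then show ?thesis unfolding a_def by simp
  qed
  have a1: "1 \<le> a \<delta>"
  proof -
    have "{c\<in>C'. dI U c = \<delta>} \<noteq> {}" using ex by blast
    then show ?thesis unfolding a_def using fC by (simp add: Suc_le_eq card_gt_0_iff)
  qed
  have aN: "real (a i) \<le> NC CARD('a) CARD('n) r i" if i: "i \<le> r" for i
  proof -
    have "{c\<in>C'. dI U c = i} \<subseteq> {W \<in> Er r. dI W U = i}" using C' dI_sym[OF U] by auto
    then have "a i \<le> card {W \<in> Er r. dI W U = i}" unfolding a_def by (intro card_mono) (use fE in auto)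
    then show ?thesis using count_dI[OF U i n] by simp
  qed
  have sa: "(\<Sum>i=0..r. a i) = card C'"
    unfolding a_def by (rule card_fibers[symmetric]) (use fC dI_le[OF U] C' in auto)
  have cons: "NC CARD('a) CARD('n) r l \<le> real (\<Sum>i=0..r. a i * (\<Sum>s=0..\<rho>. JC TYPE('a) TYPE('n) r l s i))"
    if l: "l \<le> r" for l
  proof -
    define G where "G = (\<lambda>c. {W \<in> Er r. dI W U = l \<and> dI W c \<le> \<rho>})"
    define g where "g = (\<lambda>c. \<Sum>s=0..\<rho>. card {W \<in> Er r. dI W U = l \<and> dI W c = s})"
    have gG: "g c = card (G c)" for c
    proof -
      have "card (G c) = (\<Sum>s=0..\<rho>. card {W \<in> G c. dI W c = s})"
        by (rule card_fibers) (use fE in \<open>auto simp: G_def\<close>)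
      also have "\<dots> = g c" unfolding g_def G_def by (intro sum.cong refl arg_cong[where f=card]) auto
      finally show ?thesis by simp
    qed
    have "(\<Sum>i=0..r. a i * (\<Sum>s=0..\<rho>. JC TYPE('a) TYPE('n) r l s i))
        = (\<Sum>i=0..r. \<Sum>c\<in>{c\<in>C'. dI U c = i}. g c)"
    proof (rule sum.cong[OF refl])
      fix i assume "i \<in> {0..r}"
      have "(\<Sum>c\<in>{c\<in>C'. dI U c = i}. g c) = (\<Sum>c\<in>{c\<in>C'. dI U c = i}. (\<Sum>s=0..\<rho>. JC TYPE('a) TYPE('n) r l s i))"
      proof (rule sum.cong[OF refl])
        fix c assume c: "c \<in> {c\<in>C'. dI U c = i}"
        then have "c \<in> Er r" "dI U c = i" using C' by auto
        then show "g c = (\<Sum>s=0..\<rho>. JC TYPE('a) TYPE('n) r l s i)"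
          unfolding g_def using JC_eq[OF U] by simp
      qed
      then show "a i * (\<Sum>s=0..\<rho>. JC TYPE('a) TYPE('n) r l s i) = (\<Sum>c\<in>{c\<in>C'. dI U c = i}. g c)"
        unfolding a_def by simp
    qed
    also have "\<dots> = (\<Sum>c\<in>C'. g c)"
      by (rule sum.group) (use fC dI_le[OF U] C' in auto)
    also have "\<dots> = (\<Sum>c\<in>C'. card (G c))" using gG by simp
    finally have E: "(\<Sum>i=0..r. a i * (\<Sum>s=0..\<rho>. JC TYPE('a) TYPE('n) r l s i)) = (\<Sum>c\<in>C'. card (G c))" .
    have B: "card (\<Union>c\<in>C'. G c) \<le> (\<Sum>c\<in>C'. card (G c))" by (rule card_UN_le[OF fC])
    have A: "card {W \<in> Er r. dI W U = l} \<le> card (\<Union>c\<in>C'. G c)"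
    proof (rule card_mono)
      show "finite (\<Union>c\<in>C'. G c)" using fE by (rule finite_subset[rotated]) (auto simp: G_def)
      show "{W \<in> Er r. dI W U = l} \<subseteq> (\<Union>c\<in>C'. G c)" using cov by (auto simp: G_def)
    qed
    have "card {W \<in> Er r. dI W U = l} \<le> (\<Sum>i=0..r. a i * (\<Sum>s=0..\<rho>. JC TYPE('a) TYPE('n) r l s i))"
      using A B E by linarith
    then have "real (card {W \<in> Er r. dI W U = l}) \<le> real (\<Sum>i=0..r. a i * (\<Sum>s=0..\<rho>. JC TYPE('a) TYPE('n) r l s i))"
      by (simp only: of_nat_le_iff)
    then show ?thesis using count_dI[OF U l n] by simp
  qed
  have "feasible TYPE('a) TYPE('n) r \<rho> \<delta> (\<lambda>i. int (a i))"
    unfolding feasible_def Let_def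
  proof (intro conjI allI impI ballI)
    show "\<And>i. i < \<delta> \<Longrightarrow> int (a i) = 0" using a0 by simp
    show "1 \<le> int (a \<delta>)" using a1 by simp
    show "real_of_int (int (a \<delta>)) \<le> NC CARD('a) CARD('n) r \<delta>" using aN[OF dr] by simp
    show "\<And>i. i \<in> {\<delta> + 1..r} \<Longrightarrow> 0 \<le> int (a i)" by simp
    show "\<And>i. i \<in> {\<delta> + 1..r} \<Longrightarrow> real_of_int (int (a i)) \<le> NC CARD('a) CARD('n) r i" using aN by simp
    fix l assume l: "l \<le> r"
    have "(\<Sum>i = 0..r. int (a i) * (\<Sum>s = 0..\<rho>. int (JC TYPE('a) TYPE('n) r l s i)))
        = int (\<Sum>i=0..r. a i * (\<Sum>s=0..\<rho>. JC TYPE('a) TYPE('n) r l s i))" by simp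
    then show "NC CARD('a) CARD('n) r l \<le> real_of_int (\<Sum>i = 0..r. int (a i) * (\<Sum>s = 0..\<rho>. int (JC TYPE('a) TYPE('n) r l s i)))"
      using cons[OF l] by simp
  qed
  moreover have "(\<Sum>i=0..r. int (a i)) = int (card C')"
  proof -
    have "int (\<Sum>i=0..r. a i) = (\<Sum>i=0..r. int (a i))" by (rule of_nat_sum)
    then show ?thesis using sa by simp
  qed
  ultimately show ?thesis unfolding a_def by simp
qed


lemma T_le:
  assumes "feasible TYPE('a::{finite,field}) TYPE('n::finite) r \<rho> \<delta> A"
  shows "T TYPE('a) TYPE('n) r \<rho> \<delta> \<le> (\<Sum>i=0..r. A i)"
proof -
  let ?S = "{(\<Sum>i=0..r. A i) | A. feasible TYPE('a) TYPE('n) r \<rho> \<delta> A}"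
  define M where "M = (\<Sum>i=0..r. max 0 \<lfloor>NC CARD('a) CARD('n) r i\<rfloor>)"
  have bnd: "0 \<le> B i \<and> B i \<le> max 0 \<lfloor>NC CARD('a) CARD('n) r i\<rfloor>"
    if B: "feasible TYPE('a) TYPE('n) r \<rho> \<delta> B" and i: "i \<in> {0..r}" for B i
  proof -
    have f: "(\<forall>i<\<delta>. B i = 0)" "1 \<le> B \<delta>" "real_of_int (B \<delta>) \<le> NC CARD('a) CARD('n) r \<delta>"
      "\<forall>i\<in>{\<delta>+1..r}. 0 \<le> B i \<and> real_of_int (B i) \<le> NC CARD('a) CARD('n) r i"
      using B unfolding feasible_def Let_def by auto
    show ?thesis
    proof (cases "i < \<delta>")
      case True
      then show ?thesis using f(1) by simp
    next
      case False
      then have "0 \<le> B i \<and> real_of_int (B i) \<le> NC CARD('a) CARD('n) r i"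
        using f i by (cases "i = \<delta>") auto
      then show ?thesis by (simp add: le_floor_iff)
    qed
  qed
  have "?S \<subseteq> {0..M}"
  proof
    fix x assume "x \<in> ?S"
    then obtain B where B: "feasible TYPE('a) TYPE('n) r \<rho> \<delta> B" "x = (\<Sum>i=0..r. B i)" by auto
    have "0 \<le> (\<Sum>i=0..r. B i)" using bnd[OF B(1)] by (intro sum_nonneg) auto
    moreover have "(\<Sum>i=0..r. B i) \<le> M" unfolding M_def using bnd[OF B(1)] by (intro sum_mono) auto
    ultimately show "x \<in> {0..M}" using B(2) by simp
  qed
  then have "finite ?S" using finite_subset by blast
  moreover have "(\<Sum>i=0..r. A i) \<in> ?S" using assms by blast
  ultimately show ?thesis unfolding T_def by (rule Min_le)
qed


theorem proposition5:
  fixes r \<rho> :: nat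
  assumes "r \<le> CARD('n) div 2" and "0 < \<rho>" and "\<rho> < r"
  shows "int (KC TYPE('a::{finite,field}) TYPE('n::finite) r \<rho>)
           \<ge> Max {T TYPE('a) TYPE('n) r \<rho> \<delta> | \<delta>. \<delta> \<le> \<rho>}"
proof -
  have n: "2 * r \<le> CARD('n)" using assms(1) by simp
  have fE: "finite (Er r :: ('a^'n) set set)" by (rule finite_subset[OF subset_UNIV]) simp
  obtain D where D: "D \<subseteq> (cart_basis :: ('a^'n) set)" "card D = r"
    using obtain_subset_with_card_n[of r "cart_basis :: ('a^'n) set"] n card_cart_basis[where 'a='a and 'i='n] by auto
  have "vec.span D \<in> Er (card D)" by (rule span_sub_Er[OF independent_cart_basis D(1)])
  then have nE: "(Er r :: ('a^'n) set set) \<noteq> {}" using D(2) by auto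
  let ?SK = "{card C | C :: ('a^'n) set set. C \<subseteq> Er r \<and> C \<noteq> {} \<and> covering_radius r C \<le> \<rho>}"
  have cov_iff: "covering_radius r C \<le> \<rho> \<longleftrightarrow> (\<forall>W \<in> Er r. Min ((\<lambda>c. dI W c) ` C) \<le> \<rho>)"
    for C :: "('a^'n) set set"
    unfolding covering_radius_def using fE nE by (simp add: Max_le_iff)
  have "Er r \<in> {C :: ('a^'n) set set. C \<subseteq> Er r \<and> C \<noteq> {} \<and> covering_radius r C \<le> \<rho>}"
  proof -
    have "Min ((\<lambda>c. dI W c) ` Er r) \<le> \<rho>" if W: "W \<in> (Er r :: ('a^'n) set set)" for W
    proof -
      have "Min ((\<lambda>c. dI W c) ` Er r) \<le> dI W W" using W fE by simp
      then show ?thesis using dI_refl[OF W] by simp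
    qed
    then show ?thesis using nE cov_iff by auto
  qed
  then have neSK: "?SK \<noteq> {}" by blast
  have "?SK \<subseteq> {0..card (Er r :: ('a^'n) set set)}"
  proof
    fix x assume "x \<in> ?SK"
    then obtain C :: "('a^'n) set set" where "x = card C" "C \<subseteq> Er r" by blast
    then show "x \<in> {0..card (Er r :: ('a^'n) set set)}" using card_mono[OF fE] by simp
  qed
  then have fSK: "finite ?SK" using finite_subset by blast
  have "KC TYPE('a) TYPE('n) r \<rho> \<in> ?SK" unfolding KC_def using Min_in[OF fSK neSK] .
  then obtain C :: "('a^'n) set set" where C: "C \<subseteq> Er r" "C \<noteq> {}" "covering_radius r C \<le> \<rho>"
    "KC TYPE('a) TYPE('n) r \<rho> = card C" by auto
  have cov: "\<forall>W \<in> Er r. Min ((\<lambda>c. dI W c) ` C) \<le> \<rho>" using C(3) cov_iff by simp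
  have Tle: "T TYPE('a) TYPE('n) r \<rho> \<delta> \<le> int (card C)" if d: "\<delta> \<le> \<rho>" for \<delta>
  proof -
    obtain U C' where U: "U \<in> (Er r :: ('a^'n) set set)" and C': "C' \<subseteq> Er r" "card C' \<le> card C"
      "\<forall>W \<in> Er r. \<exists>c\<in>C'. dI W c \<le> \<rho>" "\<forall>c\<in>C'. \<delta> \<le> dI U c" "\<exists>c\<in>C'. dI U c = \<delta>"
      using config[OF C(1,2) cov d assms(3) n] by blast
    have "feasible TYPE('a) TYPE('n) r \<rho> \<delta> (\<lambda>i. int (card {c\<in>C'. dI U c = i}))
         \<and> (\<Sum>i=0..r. int (card {c\<in>C'. dI U c = i})) = int (card C')"
      by (rule feas[OF U C'(1,3,4,5) _ n]) (use d assms(3) in simp)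
    then have "T TYPE('a) TYPE('n) r \<rho> \<delta> \<le> int (card C')"
      using T_le[where 'a='a and 'n='n, of r \<rho> \<delta> "\<lambda>i. int (card {c\<in>C'. dI U c = i})"] by simp
    then show ?thesis using C'(2) by simp
  qed
  have "{T TYPE('a) TYPE('n) r \<rho> \<delta> | \<delta>. \<delta> \<le> \<rho>} = (\<lambda>\<delta>. T TYPE('a) TYPE('n) r \<rho> \<delta>) ` {..\<rho>}" by auto
  then have "Max {T TYPE('a) TYPE('n) r \<rho> \<delta> | \<delta>. \<delta> \<le> \<rho>} \<le> int (card C)"
    using Tle by (simp add: Max_le_iff)
  then show ?thesis using C(4) by simp
qed


end
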